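(* Let $G=(V,E)$ be a finite simple strongly connected directed graph with a fixed total order on $V$, let $W\subseteq V$ be strongly connected, $w\in W$, and let $\mathbf b$ be a spanning tree of $G$ rooted at $w$ with $\psi(\mathbf b)=W$. Let $\mathbf f$ be the set of edges of $\mathbf b$ whose source is not in $W$, and let $\mathfrak E$ be the set of vertices erased when running the exploration algorithm on $\mathbf b$. For each $u\in\mathfrak E$, let $e(u)$ be the edge (with source $u$, not in $\mathbf b$) whose processing caused $u$ to be erased. For $\mathfrak F\subseteq\mathfrak E$, let $\mathbf f_{\mathfrak F}$ be obtained from $\mathbf f$ by replacing, for each $u\in\mathfrak F$, the edge of $\mathbf f$ going out of $u$ by $e(u)$. Then for every $\mathfrak F\subseteq\mathfrak E$, $\mathbf f_{\mathfrak F}$ is a forest rooted in $W$.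
   Context: A spanning tree of $G$ is a subgraph on all vertices with no cycle, one vertex (root) of outdegree $0$ and all others of outdegree $1$. For nonempty $U\subseteq V$, a forest rooted in $U$ is a subgraph on all vertices with no cycle in which vertices of $U$ have outdegree $0$ and all others outdegree $1$. Exploration algorithm (depends on the fixed total order of $V$). Input: a spanning tree $\mathbf a$ rooted at $v$. Initialize $A=\{v\}$, $F=\{e: s(e)\neq v\}$, $\mathbf L$ = FIFO list of edges with target $v$, by increasing source. While $\mathbf L$ is nonempty, take its first edge $e$, with source $w'$: if $e\in\mathbf a$, add $w'$ to $A$, delete from $\mathbf L$ (and $F$) all edges with source $w'$, and append to $\mathbf L$ all edges of $F$ with target $w'$ by increasing source; otherwise delete from $\mathbf L$ and $F$ all edges with source or target $w'$, and $w'$ is said to be erased (by the edge $e$). At the end $\phi(\mathbf a)=A$ and $\psi(\mathbf a)$ is the strongly connected component of $v$ in the induced graph $G_{\phi(\mathbf a)}$. *)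

theory Defs
  imports Main "HOL-Library.While_Combinator"
begin

definition simple_digraph :: "'v set \<Rightarrow> ('v \<times> 'v) set \<Rightarrow> bool" where
  "simple_digraph V E \<longleftrightarrow> finite V \<and> E \<subseteq> V \<times> V \<and> (\<forall>x. (x, x) \<notin> E)"

definition induced :: "('v \<times> 'v) set \<Rightarrow> 'v set \<Rightarrow> ('v \<times> 'v) set" where
  "induced E S = E \<inter> (S \<times> S)"

definition strongly_connected :: "('v \<times> 'v) set \<Rightarrow> 'v set \<Rightarrow> bool" where
  "strongly_connected E S \<longleftrightarrow> (\<forall>x\<in>S. \<forall>y\<in>S. (x, y) \<in> (induced E S)\<^sup>*)"

definition outdeg :: "('v \<times> 'v) set \<Rightarrow> 'v \<Rightarrow> nat" where
  "outdeg a u = card {e \<in> a. fst e = u}"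

definition rooted_forest :: "'v set \<Rightarrow> ('v \<times> 'v) set \<Rightarrow> 'v set \<Rightarrow> ('v \<times> 'v) set \<Rightarrow> bool" where
  "rooted_forest V E U a \<longleftrightarrow> U \<noteq> {} \<and> U \<subseteq> V \<and> a \<subseteq> E \<and> acyclic a \<and>
     (\<forall>u\<in>U. outdeg a u = 0) \<and> (\<forall>u\<in>V - U. outdeg a u = 1)"

definition spanning_tree :: "'v set \<Rightarrow> ('v \<times> 'v) set \<Rightarrow> 'v \<Rightarrow> ('v \<times> 'v) set \<Rightarrow> bool" where
  "spanning_tree V E r a \<longleftrightarrow> rooted_forest V E {r} a"

text \<open>State of the exploration algorithm: (A, F, L, er), where er u = Some e records
  that u was erased by the edge e.\<close>
type_synonym 'v expl_state =
  "'v set \<times> ('v \<times> 'v) set \<times> ('v \<times> 'v) list \<times> ('v \<Rightarrow> ('v \<times> 'v) option)"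

definition in_edges_sorted :: "('v::linorder \<times> 'v) set \<Rightarrow> 'v \<Rightarrow> ('v \<times> 'v) list" where
  "in_edges_sorted F t = map (\<lambda>u. (u, t)) (sorted_list_of_set {u. (u, t) \<in> F})"

definition expl_init :: "('v::linorder \<times> 'v) set \<Rightarrow> 'v \<Rightarrow> 'v expl_state" where
  "expl_init E v = ({v}, {e \<in> E. fst e \<noteq> v}, in_edges_sorted E v, (\<lambda>_. None))"

definition expl_step :: "('v::linorder \<times> 'v) set \<Rightarrow> 'v expl_state \<Rightarrow> 'v expl_state" where
  "expl_step a s = (case s of (A, F, L, er) \<Rightarrow>
     (case L of
        [] \<Rightarrow> s
      | e # L' \<Rightarrow>
          (let w' = fst e in
           if e \<in> a then
             (let F' = {x \<in> F. fst x \<noteq> w'} in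
              (insert w' A, F', filter (\<lambda>x. fst x \<noteq> w') L' @ in_edges_sorted F' w', er))
           else
             (A, {x \<in> F. fst x \<noteq> w' \<and> snd x \<noteq> w'},
              filter (\<lambda>x. fst x \<noteq> w' \<and> snd x \<noteq> w') L', er(w' := Some e)))))"

definition explore :: "('v::linorder \<times> 'v) set \<Rightarrow> ('v \<times> 'v) set \<Rightarrow> 'v \<Rightarrow> 'v expl_state" where
  "explore E a v = the (while_option (\<lambda>(A, F, L, er). L \<noteq> []) (expl_step a) (expl_init E v))"

definition phi :: "('v::linorder \<times> 'v) set \<Rightarrow> ('v \<times> 'v) set \<Rightarrow> 'v \<Rightarrow> 'v set" where
  "phi E a v = fst (explore E a v)"

definition psi :: "('v::linorder \<times> 'v) set \<Rightarrow> ('v \<times> 'v) set \<Rightarrow> 'v \<Rightarrow> 'v set" where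
  "psi E a v = (let A = phi E a v in
     {u \<in> A. (v, u) \<in> (induced E A)\<^sup>* \<and> (u, v) \<in> (induced E A)\<^sup>*})"

definition erased_by :: "('v::linorder \<times> 'v) set \<Rightarrow> ('v \<times> 'v) set \<Rightarrow> 'v \<Rightarrow> 'v \<Rightarrow> ('v \<times> 'v) option" where
  "erased_by E a v = snd (snd (snd (explore E a v)))"

end

theory Submission
  imports Defs
begin

definition einv :: "('v::linorder \<times> 'v) set \<Rightarrow> ('v \<times> 'v) set \<Rightarrow> 'v \<Rightarrow> 'v expl_state \<Rightarrow> bool" where
  "einv E a v s \<longleftrightarrow> (case s of (A,F,L,er) \<Rightarrow> v \<in> A \<and> set L \<subseteq> F \<and> F \<subseteq> E \<and>
     (\<forall>e\<in>set L. snd e \<in> A) \<and> (\<forall>e\<in>F. fst e \<notin> A \<and> fst e \<notin> dom er) \<and>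
     (\<forall>u e. er u = Some e \<longrightarrow> fst e = u \<and> snd e \<in> A \<and> u \<notin> A \<and> e \<in> E) \<and>
     (\<forall>x y. (x,y) \<in> a \<and> x \<in> A \<longrightarrow> y \<in> A))"

lemma set_in_edges: "finite F \<Longrightarrow> set (in_edges_sorted F t) = {x\<in>F. snd x = t}"
proof -
  assume f: "finite F"
  have "finite {u. (u, t) \<in> F}"
    using finite_imageI[OF f, of fst] by (rule finite_subset[rotated]) force
  thus ?thesis unfolding in_edges_sorted_def by auto
qed

lemma step_inv:
  assumes I: "einv E a v (A,F,L,er)" and L: "L \<noteq> []" and fE: "finite E"
    and fnc: "\<forall>x y z. x \<noteq> v \<longrightarrow> (x,y)\<in>a \<longrightarrow> (x,z)\<in>a \<longrightarrow> y = z"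
  shows "einv E a v (expl_step a (A,F,L,er)) \<and>
         card (fst (snd (expl_step a (A,F,L,er)))) < card F"
proof -
  obtain e L' where Le: "L = e # L'" using L by (cases L) auto
  obtain w' t where e: "e = (w', t)" by (cases e)
  have fF: "finite F" using I fE unfolding einv_def by (auto intro: finite_subset)
  have eF: "e \<in> F" and tA: "t \<in> A" and w'A: "w' \<notin> A" and w'er: "w' \<notin> dom er"
    using I Le e unfolding einv_def by auto
  have fe: "fst e = w'" using e by simp
  have vw: "w' \<noteq> v" using w'A I unfolding einv_def by auto
  show ?thesis
  proof (cases "e \<in> a")
    case True
    let ?F' = "{x \<in> F. fst x \<noteq> w'}"
    have fF': "finite ?F'" using fF by simp
    have st: "expl_step a (A,F,L,er) = (insert w' A, ?F',
        filter (\<lambda>x. fst x \<noteq> w') L' @ in_edges_sorted ?F' w', er)"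
      using True Le e unfolding expl_step_def by (simp add: Let_def)
    have c: "card ?F' < card F"
      by (rule psubset_card_mono[OF fF]) (use eF fe in blast)
    have tgt: "\<And>y. (w', y) \<in> a \<Longrightarrow> y \<in> A"
      using fnc vw True e tA by blast
    show ?thesis unfolding st using I c Le tgt w'er
      unfolding einv_def by (auto simp: set_in_edges[OF fF'])
  next
    case False
    let ?F' = "{x \<in> F. fst x \<noteq> w' \<and> snd x \<noteq> w'}"
    have st: "expl_step a (A,F,L,er) = (A, ?F',
        filter (\<lambda>x. fst x \<noteq> w' \<and> snd x \<noteq> w') L', er(w' := Some e))"
      using False Le e unfolding expl_step_def by (simp add: Let_def)
    have c: "card ?F' < card F"
      by (rule psubset_card_mono[OF fF]) (use eF fe in blast)
    have eE: "e \<in> E" using eF I unfolding einv_def by auto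
    show ?thesis unfolding st using I c Le e tA w'A eE
      unfolding einv_def by (auto split: if_splits)
  qed
qed

lemma explore_inv:
  assumes fE: "finite E" and EV: "\<forall>x. (x,x) \<notin> E"
    and fnc: "\<forall>x y z. x \<noteq> v \<longrightarrow> (x,y)\<in>a \<longrightarrow> (x,z)\<in>a \<longrightarrow> y = z"
    and root: "\<forall>y. (v,y) \<notin> a"
  shows "einv E a v (explore E a v)"
proof -
  have init: "einv E a v (expl_init E v)"
    using root EV unfolding einv_def expl_init_def
    by (auto simp: set_in_edges[OF fE])
  have step: "\<And>s. einv E a v s \<Longrightarrow> (\<lambda>(A, F, L, er). L \<noteq> []) s \<Longrightarrow>
      einv E a v (expl_step a s) \<and> card (fst (snd (expl_step a s))) < card (fst (snd s))"
    using step_inv fE fnc by fastforce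
  obtain t where t: "while_option (\<lambda>(A, F, L, er). L \<noteq> []) (expl_step a) (expl_init E v) = Some t"
    using measure_while_option_Some[where f = "\<lambda>s. card (fst (snd s))", OF step init] by blast
  have "einv E a v t"
    by (rule while_option_rule[where P="einv E a v", OF _ t init]) (use step in blast)
  thus ?thesis unfolding explore_def t by simp
qed

theorem lemma4p4:
  fixes V :: "'v::linorder set" and E :: "('v \<times> 'v) set"
    and W :: "'v set" and w :: 'v and b :: "('v \<times> 'v) set"
  assumes G: "simple_digraph V E"
    and Gsc: "strongly_connected E V"
    and WV: "W \<subseteq> V"
    and Wsc: "strongly_connected E W"
    and wW: "w \<in> W"
    and b: "spanning_tree V E w b"
    and psib: "psi E b w = W"
    and FE: "\<FF> \<subseteq> dom (erased_by E b w)"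
  shows "rooted_forest V E W
           ({e \<in> b. fst e \<notin> W \<and> fst e \<notin> \<FF>} \<union> (\<lambda>u. the (erased_by E b w u)) ` \<FF>)"
proof -
  have fV: "finite V" and EV: "E \<subseteq> V \<times> V" and noloop: "\<forall>x. (x,x) \<notin> E"
    using G unfolding simple_digraph_def by auto
  have fE: "finite E" using fV EV finite_subset by blast
  have bE: "b \<subseteq> E" and acb: "acyclic b" and bw: "outdeg b w = 0"
    and b1: "\<forall>u\<in>V - {w}. outdeg b u = 1"
    using b unfolding spanning_tree_def rooted_forest_def by auto
  have fb: "finite b" using bE fE finite_subset by blast
  have fsec: "\<And>x. finite {e \<in> b. fst e = x}" using fb by simp
  have root: "\<forall>y. (w,y) \<notin> b"
  proof (intro allI notI)
    fix y assume "(w,y) \<in> b"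
    hence "(w,y) \<in> {e \<in> b. fst e = w}" by simp
    hence ne: "{e \<in> b. fst e = w} \<noteq> {}" by blast
    have "card {e \<in> b. fst e = w} = 0" using bw unfolding outdeg_def .
    hence "{e \<in> b. fst e = w} = {}" using card_0_eq[OF fsec[of w]] by blast
    thus False using ne by blast
  qed
  have fnc: "\<forall>x y z. x \<noteq> w \<longrightarrow> (x,y)\<in>b \<longrightarrow> (x,z)\<in>b \<longrightarrow> y = z"
  proof (intro allI impI)
    fix x y z assume xw: "x \<noteq> w" and xy: "(x,y)\<in>b" and xz: "(x,z)\<in>b"
    have "x \<in> V" using xy bE EV by auto
    hence "x \<in> V - {w}" using xw by simp
    hence "outdeg b x = 1" using b1 by blast
    hence "card {e \<in> b. fst e = x} = 1" unfolding outdeg_def .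
    then obtain c where eq: "{e \<in> b. fst e = x} = {c}" using card_1_singletonE by blast
    have m1: "(x,y) \<in> {e \<in> b. fst e = x}" using xy by simp
    have m2: "(x,z) \<in> {e \<in> b. fst e = x}" using xz by simp
    have "(x,y) = c" "(x,z) = c" using m1 m2 unfolding eq by simp_all
    thus "y = z" by auto
  qed
  obtain A F L er where ex: "explore E b w = (A,F,L,er)" by (cases "explore E b w") auto
  have I: "einv E b w (A,F,L,er)" using explore_inv[OF fE noloop fnc root] ex by simp
  have phiA: "phi E b w = A" and erd: "erased_by E b w = er"
    unfolding phi_def erased_by_def ex by auto
  have WA: "W \<subseteq> A" using psib unfolding psi_def phiA by auto
  have er: "\<And>u e. er u = Some e \<Longrightarrow> fst e = u \<and> snd e \<in> A \<and> u \<notin> A \<and> e \<in> E"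
    and clos: "\<And>x y. (x,y) \<in> b \<Longrightarrow> x \<in> A \<Longrightarrow> y \<in> A"
    using I unfolding einv_def by auto
  have FF: "\<And>u. u \<in> \<FF> \<Longrightarrow> er u = Some (the (er u))" using FE erd by auto
  let ?g = "\<lambda>u. the (erased_by E b w u)"
  let ?R = "{e \<in> b. fst e \<notin> W \<and> fst e \<notin> \<FF>} \<union> ?g ` \<FF>"
  have gu: "\<And>u. u \<in> \<FF> \<Longrightarrow> fst (?g u) = u \<and> snd (?g u) \<in> A \<and> u \<notin> A \<and> ?g u \<in> E"
    using er FF erd by metis
  have RE: "?R \<subseteq> E" using bE gu by auto
  have out0: "\<forall>u\<in>W. outdeg ?R u = 0"
  proof
    fix u assume uW: "u \<in> W"
    have "{e \<in> ?R. fst e = u} = {}" using uW WA gu by fastforce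
    thus "outdeg ?R u = 0" unfolding outdeg_def by (simp only: card.empty)
  qed
  have out1: "\<forall>u\<in>V - W. outdeg ?R u = 1"
  proof
    fix u assume u: "u \<in> V - W"
    show "outdeg ?R u = 1"
    proof (cases "u \<in> \<FF>")
      case True
      have eqs: "{e \<in> ?R. fst e = u} = {?g u}"
      proof (rule set_eqI, rule iffI)
        fix x assume x: "x \<in> {e \<in> ?R. fst e = u}"
        hence fx: "fst x = u" by blast
        have "x \<notin> {e \<in> b. fst e \<notin> W \<and> fst e \<notin> \<FF>}" using fx True by blast
        hence "x \<in> ?g ` \<FF>" using x by blast
        then obtain u' where u': "u' \<in> \<FF>" "x = ?g u'" by blast
        have "u' = u" using gu[OF u'(1)] u'(2) fx by simp
        thus "x \<in> {?g u}" using u' by simp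
      next
        fix x assume "x \<in> {?g u}"
        hence "x = ?g u" by simp
        thus "x \<in> {e \<in> ?R. fst e = u}" using gu[OF True] True by blast
      qed
      show ?thesis unfolding outdeg_def eqs by simp
    next
      case False
      have eqs: "{e \<in> ?R. fst e = u} = {e \<in> b. fst e = u}"
      proof (rule set_eqI, rule iffI)
        fix x assume x: "x \<in> {e \<in> ?R. fst e = u}"
        hence fx: "fst x = u" by blast
        have "x \<notin> ?g ` \<FF>"
        proof
          assume "x \<in> ?g ` \<FF>"
          then obtain u' where u': "u' \<in> \<FF>" "x = ?g u'" by blast
          have "u' = u" using gu[OF u'(1)] u'(2) fx by simp
          thus False using u'(1) False by simp
        qed
        thus "x \<in> {e \<in> b. fst e = u}" using x by blast
      next
        fix x assume "x \<in> {e \<in> b. fst e = u}"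
        thus "x \<in> {e \<in> ?R. fst e = u}" using False u by blast
      qed
      have "u \<in> V - {w}" using u wW by auto
      hence "outdeg b u = 1" using b1 by blast
      thus ?thesis unfolding outdeg_def eqs .
    qed
  qed
  have bplus: "\<And>x y. (x,y) \<in> b\<^sup>+ \<Longrightarrow> x \<in> A \<Longrightarrow> y \<in> A"
  proof -
    fix x y assume "(x,y) \<in> b\<^sup>+" "x \<in> A"
    thus "y \<in> A" by (induction rule: trancl_induct) (auto intro: clos)
  qed
  have fromA: "\<And>y z. (y,z) \<in> ?R \<Longrightarrow> y \<in> A \<Longrightarrow> (y,z) \<in> b"
  proof -
    fix y z assume yz: "(y,z) \<in> ?R" and yA: "y \<in> A"
    have "(y,z) \<notin> ?g ` \<FF>"
    proof
      assume "(y,z) \<in> ?g ` \<FF>"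
      then obtain u' where u': "u' \<in> \<FF>" "(y,z) = ?g u'" by blast
      have "y = u'" "u' \<notin> A" using gu[OF u'(1)] u'(2) by (metis fst_conv)+
      thus False using yA by simp
    qed
    thus "(y,z) \<in> b" using yz by blast
  qed
  have key: "\<And>x y. (x,y) \<in> ?R\<^sup>+ \<Longrightarrow> (x,y) \<in> b\<^sup>+ \<or> (y \<in> A \<and> x \<notin> A)"
  proof -
    fix x y assume "(x,y) \<in> ?R\<^sup>+"
    thus "(x,y) \<in> b\<^sup>+ \<or> (y \<in> A \<and> x \<notin> A)"
    proof (induction rule: trancl_induct)
      case (base y)
      show ?case
      proof (cases "(x,y) \<in> ?g ` \<FF>")
        case True
        then obtain u' where u': "u' \<in> \<FF>" "(x,y) = ?g u'" by blast
        have "x = u'" "u' \<notin> A" "y \<in> A" using gu[OF u'(1)] u'(2) by (metis fst_conv snd_conv)+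
        thus ?thesis by simp
      next
        case False
        hence "(x,y) \<in> b" using base by blast
        thus ?thesis by blast
      qed
    next
      case (step y z)
      show ?case
      proof (cases "(x,y) \<in> b\<^sup>+")
        case True
        show ?thesis
        proof (cases "(y,z) \<in> b")
          case True
          thus ?thesis using \<open>(x,y) \<in> b\<^sup>+\<close> by (meson trancl.trancl_into_trancl)
        next
          case False
          then obtain u where uF: "u \<in> \<FF>" and yz: "(y,z) = ?g u" using step.hyps(2) by blast
          have "y \<notin> A" "z \<in> A" using gu[OF uF] yz by (metis fst_conv snd_conv)+
          hence "x \<notin> A" using bplus True by blast
          thus ?thesis using \<open>z \<in> A\<close> by blast
        qed
      next
        case False
        hence "y \<in> A" "x \<notin> A" using step.IH by auto
        hence "(y,z) \<in> b" using fromA step.hyps(2) by blast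
        hence "z \<in> A" using clos \<open>y \<in> A\<close> by blast
        thus ?thesis using \<open>x \<notin> A\<close> by blast
      qed
    qed
  qed
  have acR: "acyclic ?R"
    unfolding acyclic_def using key acb unfolding acyclic_def by blast
  show ?thesis unfolding rooted_forest_def using wW WV RE acR out0 out1 by blast
qed

end
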